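(* Let $X$ be a fibrewise locally equiconnected space over $B$ and let $f:X\to[0,1]$ be a continuous map such that $A:=f^{-1}(\{0\})$ is a fibrewise retract of $f^{-1}([0,1))$. Then $(X,A)$ is a closed fibrewise cofibred pair.
   Context: A fibrewise space over $B$ is a space $X$ with $p_X:X\to B$; subsets carry the restricted projection; fibrewise maps satisfy $p_Y\circ f=p_X$. $A\subseteq V$ is a fibrewise retract of $V$ if there is a fibrewise map $r:V\to A$ with $r|_A=1_A$. A fibrewise cofibration is a fibrewise map with the homotopy extension property with respect to fibrewise maps and fibrewise homotopies (homotopies $H$ with $p(H(x,t))=p(x)$); closed if also a closed embedding. $(X,A)$ is a closed fibrewise cofibred pair if the inclusion $A\hookrightarrow X$ is a closed fibrewise cofibration. $X$ is fibrewise locally equiconnected if the diagonal $X\to X\times_BX=\{(x,y):p_X(x)=p_X(y)\}$ is a closed fibrewise cofibration. *)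

theory Defs
  imports "HOL-Analysis.Analysis"
begin

definition fibrewise_space :: "'b topology \<Rightarrow> 'a topology \<Rightarrow> ('a \<Rightarrow> 'b) \<Rightarrow> bool" where
  "fibrewise_space B X p \<longleftrightarrow> continuous_map X B p"

definition fibrewise_map ::
  "'a topology \<Rightarrow> ('a \<Rightarrow> 'b) \<Rightarrow> 'c topology \<Rightarrow> ('c \<Rightarrow> 'b) \<Rightarrow> ('a \<Rightarrow> 'c) \<Rightarrow> bool" where
  "fibrewise_map X p Y q f \<longleftrightarrow> continuous_map X Y f \<and> (\<forall>x\<in>topspace X. q (f x) = p x)"

text \<open>Fibrewise homotopy extension property of u : A -> X with respect to all fibrewise
  spaces E over B whose carrier type is 'e.\<close>

definition fibrewise_cofibration ::
  "'e itself \<Rightarrow> 'b topology \<Rightarrow> 'a topology \<Rightarrow> ('a \<Rightarrow> 'b) \<Rightarrow> 'x topology \<Rightarrow> ('x \<Rightarrow> 'b)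
    \<Rightarrow> ('a \<Rightarrow> 'x) \<Rightarrow> bool" where
  "fibrewise_cofibration (ty :: 'e itself) B A pA X pX u \<longleftrightarrow>
     fibrewise_map A pA X pX u \<and>
     (\<forall>(E :: 'e topology) q g h.
        fibrewise_space B E q \<and> fibrewise_map X pX E q g \<and>
        fibrewise_map (prod_topology A (top_of_set {0..1::real})) (\<lambda>(a,t). pA a) E q h \<and>
        (\<forall>a\<in>topspace A. h (a, 0) = g (u a))
        \<longrightarrow> (\<exists>H. fibrewise_map (prod_topology X (top_of_set {0..1::real})) (\<lambda>(x,t). pX x) E q H \<and>
                 (\<forall>x\<in>topspace X. H (x, 0) = g x) \<and>
                 (\<forall>a\<in>topspace A. \<forall>t\<in>{0..1}. H (u a, t) = h (a, t))))"

definition closed_fibrewise_cofibration ::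
  "'e itself \<Rightarrow> 'b topology \<Rightarrow> 'a topology \<Rightarrow> ('a \<Rightarrow> 'b) \<Rightarrow> 'x topology \<Rightarrow> ('x \<Rightarrow> 'b)
    \<Rightarrow> ('a \<Rightarrow> 'x) \<Rightarrow> bool" where
  "closed_fibrewise_cofibration ty B A pA X pX u \<longleftrightarrow>
     fibrewise_cofibration ty B A pA X pX u \<and>
     embedding_map A X u \<and> closedin X (u ` topspace A)"

definition fibre_product :: "'a topology \<Rightarrow> ('a \<Rightarrow> 'b) \<Rightarrow> ('a \<times> 'a) topology" where
  "fibre_product X p = subtopology (prod_topology X X) {(x,y). p x = p y}"

text \<open>Fibrewise local equiconnectedness. HEP is tested against fibrewise spaces on the type
  of the fibrewise mapping cylinder of the diagonal, which is the universal test space.\<close>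

definition fibrewise_LEC :: "'b topology \<Rightarrow> 'a topology \<Rightarrow> ('a \<Rightarrow> 'b) \<Rightarrow> bool" where
  "fibrewise_LEC B X p \<longleftrightarrow> fibrewise_space B X p \<and>
     closed_fibrewise_cofibration TYPE(('a \<times> 'a) \<times> real) B X p
        (fibre_product X p) (\<lambda>(x,y). p x) (\<lambda>x. (x, x))"

definition fibrewise_retract :: "'a topology \<Rightarrow> ('a \<Rightarrow> 'b) \<Rightarrow> 'a set \<Rightarrow> 'a set \<Rightarrow> bool" where
  "fibrewise_retract X p A V \<longleftrightarrow> A \<subseteq> V \<and>
     (\<exists>r. fibrewise_map (subtopology X V) p (subtopology X A) p r \<and> (\<forall>x\<in>A. r x = x))"

end

theory Submission
  imports Defs
begin


abbreviation "II \<equiv> top_of_set {0..1::real}"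

lemma topspace_fibre_product:
  "topspace (fibre_product X p) = {(x,y). x \<in> topspace X \<and> y \<in> topspace X \<and> p x = p y}"
  by (auto simp: fibre_product_def)

lemma extract_R:
  fixes X :: "'a topology" and p :: "'a \<Rightarrow> 'b" and B :: "'b topology"
  assumes "fibrewise_LEC B X p"
  obtains R where
    "continuous_map (prod_topology (fibre_product X p) II) (prod_topology (fibre_product X p) II) R"
    "\<And>z. z \<in> topspace (fibre_product X p) \<Longrightarrow> R (z,0) = (z,0)"
    "\<And>x t. x \<in> topspace X \<Longrightarrow> t \<in> {0..1} \<Longrightarrow> R ((x,x),t) = ((x,x),t)"
    "\<And>z t. z \<in> topspace (fibre_product X p) \<Longrightarrow> t \<in> {0..1} \<Longrightarrow> snd (R (z,t)) > 0 \<Longrightarrow> fst (fst (R (z,t))) = snd (fst (R (z,t)))"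
    "\<And>z t. z \<in> topspace (fibre_product X p) \<Longrightarrow> t \<in> {0..1} \<Longrightarrow> p (fst (fst (R (z,t)))) = p (fst z)"
proof -
  let ?XB = "fibre_product X p"
  let ?M = "{(z::'a\<times>'a,t::real). fst z = snd z \<or> t = 0}"
  let ?E = "subtopology (prod_topology ?XB II) ?M"
  let ?q = "\<lambda>((x::'a,y::'a),t::real). p x"
  have pc: "continuous_map X B p" using assms by (simp add: fibrewise_LEC_def fibrewise_space_def)
  have XBX: "continuous_map ?XB X fst"
    unfolding fibre_product_def by (intro continuous_map_from_subtopology continuous_map_fst)
  have qc: "continuous_map ?E B ?q"
  proof -
    have "continuous_map (prod_topology ?XB II) B (p \<circ> fst \<circ> fst)"
      by (rule continuous_map_compose[OF continuous_map_fst continuous_map_compose[OF XBX pc]])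
    moreover have "p \<circ> fst \<circ> fst = ?q" by (simp add: fun_eq_iff case_prod_unfold)
    ultimately have "continuous_map (prod_topology ?XB II) B ?q" by simp
    then show ?thesis by (rule continuous_map_from_subtopology)
  qed
  have cof: "fibrewise_cofibration TYPE(('a \<times> 'a) \<times> real) B X p ?XB (\<lambda>(x,y). p x) (\<lambda>x. (x, x))"
    using assms by (simp add: fibrewise_LEC_def closed_fibrewise_cofibration_def)
  have gm: "fibrewise_map ?XB (\<lambda>(x,y). p x) ?E ?q (\<lambda>z. (z,0))"
  proof -
    have "continuous_map ?XB (prod_topology ?XB II) (\<lambda>z. (z,0))"
    proof -
      have "continuous_map ?XB II (\<lambda>z. 0::real)" by (simp add: continuous_map_const)
      from continuous_map_pairedI[OF continuous_map_id this] show ?thesis by (simp add: id_def)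
    qed
    then have "continuous_map ?XB ?E (\<lambda>z. (z,0))"
      unfolding continuous_map_in_subtopology by auto
    then show ?thesis unfolding fibrewise_map_def by (simp add: case_prod_unfold)
  qed
  have hm: "fibrewise_map (prod_topology X II) (\<lambda>(a,t). p a) ?E ?q (\<lambda>(x,t). ((x,x),t))"
  proof -
    have c1: "continuous_map (prod_topology X II) (prod_topology X X) (\<lambda>u. (fst u, fst u))"
      by (rule continuous_map_pairedI[OF continuous_map_fst continuous_map_fst])
    have "continuous_map (prod_topology X II) ?XB (\<lambda>u. (fst u, fst u))"
      unfolding fibre_product_def continuous_map_in_subtopology using c1 by auto
    then have "continuous_map (prod_topology X II) (prod_topology ?XB II) (\<lambda>u. ((fst u, fst u), snd u))"
      by (rule continuous_map_pairedI[OF _ continuous_map_snd])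
    moreover have "(\<lambda>u::'a\<times>real. ((fst u, fst u), snd u)) = (\<lambda>(x,t). ((x,x),t))" by auto
    ultimately have "continuous_map (prod_topology X II) (prod_topology ?XB II) (\<lambda>(x,t). ((x,x),t))"
      by (simp only:)
    then have "continuous_map (prod_topology X II) ?E (\<lambda>(x,t). ((x,x),t))"
      unfolding continuous_map_in_subtopology by auto
    then show ?thesis unfolding fibrewise_map_def by auto
  qed
  have imp: "\<forall>(E :: (('a \<times> 'a) \<times> real) topology) q g h.
        fibrewise_space B E q \<and> fibrewise_map ?XB (\<lambda>(x,y). p x) E q g \<and>
        fibrewise_map (prod_topology X (top_of_set {0..1::real})) (\<lambda>(a,t). p a) E q h \<and>
        (\<forall>a\<in>topspace X. h (a, 0) = g ((\<lambda>x. (x, x)) a))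
        \<longrightarrow> (\<exists>H. fibrewise_map (prod_topology ?XB (top_of_set {0..1::real})) (\<lambda>(x,t). (\<lambda>(x,y). p x) x) E q H \<and>
                 (\<forall>x\<in>topspace ?XB. H (x, 0) = g x) \<and>
                 (\<forall>a\<in>topspace X. \<forall>t\<in>{0..1}. H ((\<lambda>x. (x, x)) a, t) = h (a, t)))"
    using cof unfolding fibrewise_cofibration_def by (rule conjunct2)
  have fs: "fibrewise_space B ?E ?q" using qc by (simp add: fibrewise_space_def)
  have "\<exists>H. fibrewise_map (prod_topology ?XB II) (\<lambda>(x,t). (\<lambda>(x,y). p x) x) ?E ?q H \<and>
                 (\<forall>x\<in>topspace ?XB. H (x, 0) = (x,0)) \<and>
                 (\<forall>a\<in>topspace X. \<forall>t\<in>{0..1}. H ((a, a), t) = ((a,a), t))"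
    using imp[rule_format, of ?E ?q "\<lambda>z. (z,0)" "\<lambda>(x,t). ((x,x),t)"] fs gm hm by simp
  then obtain H where H: "fibrewise_map (prod_topology ?XB II) (\<lambda>(z,t). (\<lambda>(x,y). p x) z) ?E ?q H"
      "\<And>z. z \<in> topspace ?XB \<Longrightarrow> H (z, 0) = (z,0)"
      "\<And>a t. a \<in> topspace X \<Longrightarrow> t \<in> {0..1} \<Longrightarrow> H ((a,a), t) = ((a,a),t)"
    by blast
  show ?thesis
  proof (rule that[of H])
    show c: "continuous_map (prod_topology ?XB II) (prod_topology ?XB II) H"
      using H(1) by (auto simp: fibrewise_map_def continuous_map_in_subtopology)
    show "\<And>z. z \<in> topspace ?XB \<Longrightarrow> H (z,0) = (z,0)" by (rule H(2))
    show "\<And>x t. x \<in> topspace X \<Longrightarrow> t \<in> {0..1} \<Longrightarrow> H ((x,x),t) = ((x,x),t)" by (rule H(3))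
    fix z t assume z: "z \<in> topspace ?XB" and t: "t \<in> {0..1::real}"
    have cE: "continuous_map (prod_topology ?XB II) ?E H" using H(1) by (simp add: fibrewise_map_def)
    have zt: "(z,t) \<in> topspace (prod_topology ?XB II)" using z t by simp
    have "H (z,t) \<in> topspace ?E"
      using continuous_map_image_subset_topspace[OF cE] zt by (meson image_subset_iff)
    then have mem: "H (z,t) \<in> ?M" and memt: "H (z,t) \<in> topspace (prod_topology ?XB II)"
      by auto
    then show "snd (H (z,t)) > 0 \<Longrightarrow> fst (fst (H (z,t))) = snd (fst (H (z,t)))"
      by (auto simp: case_prod_unfold)
    have "?q (H (z,t)) = (\<lambda>(x,y). p x) z"
      using H(1) z t unfolding fibrewise_map_def by auto
    then show "p (fst (fst (H (z,t)))) = p (fst z)"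
      by (auto simp: case_prod_unfold)
  qed
qed



lemma cm_comp: "continuous_map X Y f \<Longrightarrow> continuous_map Y Z g \<Longrightarrow> continuous_map X Z (\<lambda>x. g (f x))"
  using continuous_map_compose[of X Y f Z g] by (simp add: o_def)

lemma cm_sub_into: "continuous_map X Y f \<Longrightarrow> (\<And>x. x \<in> topspace X \<Longrightarrow> f x \<in> T) \<Longrightarrow> continuous_map X (subtopology Y T) f"
  by (auto simp: continuous_map_in_subtopology)

lemma cm_ident_sub: "continuous_map (subtopology X S) X (\<lambda>x. x)"
  using continuous_map_id_subt by (simp add: id_def)

lemma cm_II_real: "continuous_map Z II g \<Longrightarrow> continuous_map Z euclideanreal g"
  by (rule continuous_map_into_fulltopology)

lemma cm_real_II: "continuous_map Z euclideanreal g \<Longrightarrow> (\<And>z. z \<in> topspace Z \<Longrightarrow> g z \<in> {0..1}) \<Longrightarrow> continuous_map Z II g"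
  by (auto simp: continuous_map_in_subtopology)

locale L =
  fixes X :: "'a topology" and p :: "'a \<Rightarrow> 'b" and f :: "'a \<Rightarrow> real" and r :: "'a \<Rightarrow> 'a"
    and R :: "('a \<times> 'a) \<times> real \<Rightarrow> ('a \<times> 'a) \<times> real"
  assumes Rc: "continuous_map (prod_topology (fibre_product X p) II) (prod_topology (fibre_product X p) II) R"
    and R0: "\<And>z. z \<in> topspace (fibre_product X p) \<Longrightarrow> R (z,0) = (z,0)"
    and Rdiag: "\<And>x t. x \<in> topspace X \<Longrightarrow> t \<in> {0..1} \<Longrightarrow> R ((x,x),t) = ((x,x),t)"
    and Rpos: "\<And>z t. z \<in> topspace (fibre_product X p) \<Longrightarrow> t \<in> {0..1} \<Longrightarrow> snd (R (z,t)) > 0 \<Longrightarrow> fst (fst (R (z,t))) = snd (fst (R (z,t)))"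
    and Rp: "\<And>z t. z \<in> topspace (fibre_product X p) \<Longrightarrow> t \<in> {0..1} \<Longrightarrow> p (fst (fst (R (z,t)))) = p (fst z)"
    and fc: "continuous_map X euclideanreal f"
    and frange: "\<And>x. x \<in> topspace X \<Longrightarrow> 0 \<le> f x \<and> f x \<le> 1"
    and rc: "continuous_map (subtopology X {x \<in> topspace X. f x < 1}) X r"
    and rA: "\<And>x. x \<in> topspace X \<Longrightarrow> f x < 1 \<Longrightarrow> r x \<in> topspace X \<and> f (r x) = 0 \<and> p (r x) = p x"
    and rid: "\<And>x. x \<in> topspace X \<Longrightarrow> f x = 0 \<Longrightarrow> r x = x"
begin

abbreviation "XB \<equiv> fibre_product X p"
definition "U = {x \<in> topspace X. f x < 1}"
definition "A = {x \<in> topspace X. f x = 0}"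
definition "s = (\<lambda>x. (x, r x))"
definition "V = {x \<in> U. snd (R (s x, 1)) > 0}"
definition "G = (\<lambda>u. if snd u \<le> 1/2 then fst (fst (R (s (fst u), 2 * snd u))) else snd (fst (R (s (fst u), 2 - 2 * snd u))))"

lemma Rrange: "z \<in> topspace XB \<Longrightarrow> t \<in> {0..1} \<Longrightarrow> fst (R (z,t)) \<in> topspace XB \<and> snd (R (z,t)) \<in> {0..1}"
proof -
  assume "z \<in> topspace XB" "t \<in> {0..1}"
  then have "(z,t) \<in> topspace (prod_topology XB II)" by simp
  then have "R (z,t) \<in> topspace (prod_topology XB II)"
    using continuous_map_image_subset_topspace[OF Rc] by blast
  then show ?thesis by (cases "R (z,t)") auto
qed

lemma s_cont: "continuous_map (subtopology X U) XB s"
proof -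
  have "continuous_map (subtopology X U) (prod_topology X X) (\<lambda>x. (x, r x))"
    using cm_ident_sub rc by (intro continuous_map_pairedI) (auto simp: U_def)
  then show ?thesis unfolding fibre_product_def s_def
    by (rule cm_sub_into) (auto simp: U_def rA)
qed

lemma s_top: "x \<in> U \<Longrightarrow> s x \<in> topspace XB"
  using rA by (auto simp: U_def s_def topspace_fibre_product)

lemma AU: "A \<subseteq> U" by (auto simp: A_def U_def)

lemma AV: "A \<subseteq> V"
proof
  fix x assume x: "x \<in> A"
  then have "s x = (x,x)" using rid by (auto simp: A_def s_def)
  then show "x \<in> V" using x AU Rdiag[of x 1] by (auto simp: V_def A_def)
qed

lemma V_open: "openin X V"
proof -
  have c: "continuous_map (subtopology X U) euclideanreal (\<lambda>x. snd (R (s x, 1)))"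
  proof -
    have "continuous_map (subtopology X U) (prod_topology XB II) (\<lambda>x. (s x, 1))"
      using s_cont by (intro continuous_map_pairedI) (auto simp: continuous_map_const)
    then have "continuous_map (subtopology X U) (prod_topology XB II) (\<lambda>x. R (s x, 1))"
      using Rc by (rule cm_comp)
    then have "continuous_map (subtopology X U) II (\<lambda>x. snd (R (s x, 1)))"
      using continuous_map_snd by (rule cm_comp)
    then show ?thesis by (rule cm_II_real)
  qed
  have o1: "openin (subtopology X U) {x \<in> topspace (subtopology X U). snd (R (s x, 1)) \<in> {0<..}}"
    using openin_continuous_map_preimage[OF c, of "{0<..}"] by simp
  have o2: "openin X U"
  proof -
    have "openin X {x \<in> topspace X. f x \<in> {..<1}}"
      using openin_continuous_map_preimage[OF fc, of "{..<1}"] by simp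
    then show ?thesis by (simp add: U_def)
  qed
  have e: "{x \<in> topspace (subtopology X U). snd (R (s x, 1)) \<in> {0<..}} = V"
    unfolding V_def U_def topspace_subtopology by blast
  show ?thesis using openin_trans_full[OF o1 o2] unfolding e .
qed

lemma XB_fst: "continuous_map XB X fst"
  unfolding fibre_product_def by (intro continuous_map_from_subtopology continuous_map_fst)
lemma XB_snd: "continuous_map XB X snd"
  unfolding fibre_product_def by (intro continuous_map_from_subtopology continuous_map_snd)

lemma Rs_cont:
  assumes "continuous_map P (subtopology X U) \<phi>" "continuous_map P euclideanreal \<tau>"
    "\<And>u. u \<in> topspace P \<Longrightarrow> \<tau> u \<in> {0..1}"
  shows "continuous_map P (prod_topology XB II) (\<lambda>u. R (s (\<phi> u), \<tau> u))"
proof -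
  have "continuous_map P XB (\<lambda>u. s (\<phi> u))" using assms(1) s_cont by (rule cm_comp)
  moreover have "continuous_map P II \<tau>" using assms(2,3) by (rule cm_real_II)
  ultimately have "continuous_map P (prod_topology XB II) (\<lambda>u. (s (\<phi> u), \<tau> u))"
    by (rule continuous_map_pairedI)
  then show ?thesis using Rc by (rule cm_comp)
qed

lemma fst_sub_cont: "T \<subseteq> U \<times> UNIV \<Longrightarrow> continuous_map (subtopology (prod_topology X Y) T) (subtopology X U) fst"
  by (rule cm_sub_into[OF continuous_map_subtopology_fst]) auto

lemma snd_sub_cont: "continuous_map (subtopology (prod_topology X II) T) euclideanreal snd"
  by (rule cm_II_real[OF continuous_map_subtopology_snd])

lemma VU: "V \<subseteq> U" by (auto simp: V_def)

lemma G_cont: "continuous_map (subtopology (prod_topology X II) (V \<times> {0..1})) X G"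
proof -
  let ?Z = "subtopology (prod_topology X II) (V \<times> {0..1})"
  have "continuous_map ?Z X (\<lambda>u. if snd u \<le> 1/2 then fst (fst (R (s (fst u), 2 * snd u))) else snd (fst (R (s (fst u), 2 - 2 * snd u))))"
  proof (rule continuous_map_cases_le)
    show "continuous_map ?Z euclideanreal snd" by (rule snd_sub_cont)
    show "continuous_map ?Z euclideanreal (\<lambda>x. 1/2)" by simp
    let ?P1 = "subtopology ?Z {x \<in> topspace ?Z. snd x \<le> 1/2}"
    have P1: "?P1 = subtopology (prod_topology X II) (V \<times> {0..1} \<inter> {x \<in> topspace ?Z. snd x \<le> 1/2})"
      by (simp add: subtopology_subtopology)
    have "continuous_map ?P1 (prod_topology XB II) (\<lambda>u. R (s (fst u), 2 * snd u))"
    proof (rule Rs_cont)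
      show "continuous_map ?P1 (subtopology X U) fst" unfolding P1 using VU by (intro fst_sub_cont) auto
      show "continuous_map ?P1 euclideanreal (\<lambda>u. 2 * snd u)" unfolding P1
        by (intro continuous_intros snd_sub_cont)
      show "\<And>u. u \<in> topspace ?P1 \<Longrightarrow> 2 * snd u \<in> {0..1}" by auto
    qed
    then show "continuous_map ?P1 X (\<lambda>u. fst (fst (R (s (fst u), 2 * snd u))))"
      using cm_comp[OF continuous_map_fst XB_fst] cm_comp by blast
    let ?P2 = "subtopology ?Z {x \<in> topspace ?Z. 1/2 \<le> snd x}"
    have P2: "?P2 = subtopology (prod_topology X II) (V \<times> {0..1} \<inter> {x \<in> topspace ?Z. 1/2 \<le> snd x})"
      by (simp add: subtopology_subtopology)
    have "continuous_map ?P2 (prod_topology XB II) (\<lambda>u. R (s (fst u), 2 - 2 * snd u))"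
    proof (rule Rs_cont)
      show "continuous_map ?P2 (subtopology X U) fst" unfolding P2 using VU by (intro fst_sub_cont) auto
      show "continuous_map ?P2 euclideanreal (\<lambda>u. 2 - 2 * snd u)" unfolding P2
        by (intro continuous_intros snd_sub_cont)
      show "\<And>u. u \<in> topspace ?P2 \<Longrightarrow> 2 - 2 * snd u \<in> {0..1}" by auto
    qed
    then show "continuous_map ?P2 X (\<lambda>u. snd (fst (R (s (fst u), 2 - 2 * snd u))))"
      using cm_comp[OF continuous_map_fst XB_snd] cm_comp by blast
    fix u assume u: "u \<in> topspace ?Z" "snd u = 1/2"
    then have x: "fst u \<in> V" by auto
    then have "s (fst u) \<in> topspace XB" using VU s_top by auto
    moreover have "snd (R (s (fst u), 1)) > 0" using x by (auto simp: V_def)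
    ultimately have "fst (fst (R (s (fst u), 1))) = snd (fst (R (s (fst u), 1)))"
      using Rpos by auto
    moreover have "2 * snd u = 1" "2 - 2 * snd u = 1" using u(2) by simp_all
    ultimately show "fst (fst (R (s (fst u), 2 * snd u))) = snd (fst (R (s (fst u), 2 - 2 * snd u)))"
      by (simp only:)
  qed
  then show ?thesis by (simp add: G_def)
qed

end


context L begin

lemma G_top: "x \<in> V \<Longrightarrow> t \<in> {0..1} \<Longrightarrow> G (x,t) \<in> topspace X"
proof -
  assume "x \<in> V" "t \<in> {0..1}"
  then have "(x,t) \<in> topspace (subtopology (prod_topology X II) (V \<times> {0..1}))"
    using V_open openin_subset by fastforce
  then show ?thesis using continuous_map_image_subset_topspace[OF G_cont] by blast
qed

lemma G0: "x \<in> V \<Longrightarrow> G (x,0) = x"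
  using R0[of "s x"] s_top VU by (auto simp: G_def s_def)

lemma G1: "x \<in> V \<Longrightarrow> G (x,1) = r x"
  using R0[of "s x"] s_top VU by (auto simp: G_def s_def)

lemma GA: "a \<in> A \<Longrightarrow> t \<in> {0..1} \<Longrightarrow> G (a,t) = a"
proof -
  assume a: "a \<in> A" and t: "t \<in> {0..1}"
  then have sa: "s a = (a,a)" and aX: "a \<in> topspace X" using rid by (auto simp: A_def s_def)
  show ?thesis
  proof (cases "t \<le> 1/2")
    case True
    then have "2*t \<in> {0..1}" using t by auto
    then show ?thesis using True Rdiag[OF aX] by (simp add: G_def sa)
  next
    case False
    then have "2 - 2*t \<in> {0..1}" using t by auto
    then show ?thesis using False Rdiag[OF aX] by (simp add: G_def sa)
  qed
qed

lemma Gp: "x \<in> V \<Longrightarrow> t \<in> {0..1} \<Longrightarrow> p (G (x,t)) = p x"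
proof -
  assume x: "x \<in> V" and t: "t \<in> {0..1}"
  have sx: "s x \<in> topspace XB" using x VU s_top by auto
  show ?thesis
  proof (cases "t \<le> 1/2")
    case True
    then have "2*t \<in> {0..1}" using t by auto
    then show ?thesis using True Rp[OF sx] by (simp add: G_def s_def)
  next
    case False
    then have tt: "2 - 2*t \<in> {0..1}" using t by auto
    have "fst (R (s x, 2 - 2*t)) \<in> topspace XB" using Rrange[OF sx tt] by simp
    then have "p (snd (fst (R (s x, 2 - 2*t)))) = p (fst (fst (R (s x, 2 - 2*t))))"
      by (auto simp: topspace_fibre_product)
    then show ?thesis using False Rp[OF sx tt] by (simp add: G_def s_def)
  qed
qed

definition "\<kappa> = (\<lambda>x. if f x \<le> 1/2 then snd (R (s x, 1)) * (1 - 2 * f x) else 0)"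

lemma kappa_cont: "continuous_map X euclideanreal \<kappa>"
proof -
  have "continuous_map X euclideanreal (\<lambda>x. if f x \<le> 1/2 then snd (R (s x, 1)) * (1 - 2 * f x) else 0)"
  proof (rule continuous_map_cases_le)
    show "continuous_map X euclideanreal f" by (rule fc)
    show "continuous_map X euclideanreal (\<lambda>x. 1/2)" by simp
    let ?P = "subtopology X {x \<in> topspace X. f x \<le> 1/2}"
    have "continuous_map ?P (prod_topology XB II) (\<lambda>u. R (s u, 1))"
    proof (rule Rs_cont)
      show "continuous_map ?P (subtopology X U) (\<lambda>x. x)"
        by (rule cm_sub_into[OF cm_ident_sub]) (auto simp: U_def)
    qed auto
    then have "continuous_map ?P euclideanreal (\<lambda>u. snd (R (s u, 1)))"
      using cm_II_real[OF cm_comp[OF _ continuous_map_snd]] by blast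
    moreover have "continuous_map ?P euclideanreal f"
      using fc by (rule continuous_map_from_subtopology)
    ultimately show "continuous_map ?P euclideanreal (\<lambda>x. snd (R (s x, 1)) * (1 - 2 * f x))"
      by (intro continuous_intros)
  qed auto
  then show ?thesis by (simp add: \<kappa>_def)
qed

lemma kappa_range: "x \<in> topspace X \<Longrightarrow> 0 \<le> \<kappa> x \<and> \<kappa> x \<le> 1"
proof -
  assume x: "x \<in> topspace X"
  show ?thesis
  proof (cases "f x \<le> 1/2")
    case True
    then have "x \<in> U" using x by (auto simp: U_def)
    then have "snd (R (s x, 1)) \<in> {0..1}" using Rrange s_top by auto
    moreover have "0 \<le> f x" using frange x by auto
    ultimately show ?thesis using True by (auto simp: \<kappa>_def intro!: mult_nonneg_nonneg mult_le_one)
  qed (auto simp: \<kappa>_def)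
qed

lemma kappa_A: "x \<in> A \<Longrightarrow> \<kappa> x = 1"
proof -
  assume x: "x \<in> A"
  then have "s x = (x,x)" "x \<in> topspace X" "f x = 0" using rid by (auto simp: A_def s_def)
  then show ?thesis using Rdiag[of x 1] by (simp add: \<kappa>_def)
qed

lemma kappa_V: "x \<in> topspace X \<Longrightarrow> \<kappa> x > 0 \<Longrightarrow> x \<in> V"
proof -
  assume x: "x \<in> topspace X" and k: "\<kappa> x > 0"
  then have f: "f x \<le> 1/2" by (auto simp: \<kappa>_def split: if_splits)
  then have "snd (R (s x, 1)) * (1 - 2 * f x) > 0" using k by (simp add: \<kappa>_def)
  moreover have "1 - 2 * f x \<ge> 0" using f by simp
  ultimately have "snd (R (s x, 1)) > 0"
    by (metis less_le_not_le mult_nonpos_nonneg not_le)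
  then show ?thesis using x f by (auto simp: V_def U_def)
qed

end


lemma local_cont:
  assumes "\<And>z. z \<in> topspace Z \<Longrightarrow> F z \<in> topspace Y"
    and "\<And>z N. z \<in> topspace Z \<Longrightarrow> openin Y N \<Longrightarrow> F z \<in> N \<Longrightarrow> \<exists>Q. openin Z Q \<and> z \<in> Q \<and> (\<forall>w\<in>Q. F w \<in> N)"
  shows "continuous_map Z Y F"
  unfolding continuous_map_def
proof (intro conjI allI impI)
  show "F \<in> topspace Z \<rightarrow> topspace Y" using assms(1) by auto
  fix N assume N: "openin Y N"
  show "openin Z {x \<in> topspace Z. F x \<in> N}"
  proof (subst openin_subopen, intro ballI)
    fix z assume "z \<in> {x \<in> topspace Z. F x \<in> N}"
    then have zZ: "z \<in> topspace Z" and zN: "F z \<in> N" by auto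
    obtain Q where Q: "openin Z Q" "z \<in> Q" "\<forall>w\<in>Q. F w \<in> N" using assms(2)[OF zZ N zN] by blast
    have "Q \<subseteq> topspace Z" using Q(1) by (rule openin_subset)
    then have "Q \<subseteq> {x \<in> topspace Z. F x \<in> N}" using Q(3) by blast
    then show "\<exists>T. openin Z T \<and> z \<in> T \<and> T \<subseteq> {x \<in> topspace Z. F x \<in> N}"
      using Q by blast
  qed
qed

lemma local_from_open:
  assumes "openin Z S" "continuous_map (subtopology Z S) Y F" "z \<in> S" "openin Y N" "F z \<in> N"
  shows "\<exists>Q. openin Z Q \<and> z \<in> Q \<and> (\<forall>w\<in>Q. F w \<in> N)"
proof -
  have "openin (subtopology Z S) {x \<in> topspace (subtopology Z S). F x \<in> N}"
    using openin_continuous_map_preimage[OF assms(2,4)] .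
  then have "openin Z {x \<in> topspace (subtopology Z S). F x \<in> N}"
    using openin_trans_full assms(1) by blast
  moreover have "z \<in> topspace Z" using assms(1,3) openin_subset by blast
  ultimately show ?thesis using assms(3,5) by (intro exI[of _ "{x \<in> topspace (subtopology Z S). F x \<in> N}"]) auto
qed

lemma minmax_aux: "min 1 (max (a::real) b) = 1 \<or> (a \<le> min 1 (max a b) \<and> b \<le> min 1 (max a b))"
  by (auto simp: min_def max_def)

context L begin

definition "\<psi> = (\<lambda>x. min 1 (max (f x) (2 * (1 - \<kappa> x))))"
definition "\<beta> = (\<lambda>x. min 1 (max 0 (4 * \<kappa> x - 1)))"
definition "\<sigma> = (\<lambda>u. \<beta> (fst u) * min 1 (snd u / \<psi> (fst u)))"
definition "D = (\<lambda>u. if \<kappa> (fst u) \<le> 1/4 then fst u else G (fst u, \<sigma> u))"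

lemma psi_cont: "continuous_map X euclideanreal \<psi>"
proof -
  have k2: "continuous_map X euclideanreal (\<lambda>x. 2 * (1 - \<kappa> x))"
    by (rule continuous_map_real_mult_left[OF continuous_map_diff[OF continuous_map_canonical_const kappa_cont]])
  show ?thesis unfolding \<psi>_def
    by (rule continuous_map_real_min[OF continuous_map_canonical_const continuous_map_real_max[OF fc k2]])
qed

lemma beta_cont: "continuous_map X euclideanreal \<beta>"
proof -
  have k2: "continuous_map X euclideanreal (\<lambda>x. 4 * \<kappa> x - 1)"
    by (rule continuous_map_diff[OF continuous_map_real_mult_left[OF kappa_cont] continuous_map_canonical_const])
  show ?thesis unfolding \<beta>_def
    by (rule continuous_map_real_min[OF continuous_map_canonical_const continuous_map_real_max[OF continuous_map_canonical_const k2]])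
qed

lemma psi_range: "x \<in> topspace X \<Longrightarrow> 0 \<le> \<psi> x \<and> \<psi> x \<le> 1"
  using frange[of x] kappa_range[of x] by (auto simp: \<psi>_def)

lemma psi_A: "x \<in> A \<Longrightarrow> \<psi> x = 0"
  using kappa_A[of x] by (auto simp: \<psi>_def A_def)

lemma psi0: "x \<in> topspace X \<Longrightarrow> \<psi> x = 0 \<Longrightarrow> x \<in> A"
proof -
  assume x: "x \<in> topspace X" and z: "\<psi> x = 0"
  have "\<psi> x = 1 \<or> f x \<le> \<psi> x" unfolding \<psi>_def using minmax_aux by blast
  then have "f x \<le> 0" using z by auto
  then show ?thesis using frange[OF x] x by (auto simp: A_def)
qed

lemma psi_lt1: "x \<in> topspace X \<Longrightarrow> \<psi> x < 1 \<Longrightarrow> \<kappa> x > 1/2"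
proof -
  assume "\<psi> x < 1"
  moreover have "\<psi> x = 1 \<or> 2 * (1 - \<kappa> x) \<le> \<psi> x" unfolding \<psi>_def using minmax_aux by blast
  ultimately have "2 * (1 - \<kappa> x) < 1" by auto
  then show ?thesis by (simp add: algebra_simps)
qed

lemma sigma_range: "x \<in> topspace X \<Longrightarrow> t \<in> {0..1} \<Longrightarrow> \<sigma> (x,t) \<in> {0..1}"
proof -
  assume x: "x \<in> topspace X" and t: "t \<in> {0..1}"
  have b: "0 \<le> \<beta> x" "\<beta> x \<le> 1" by (auto simp: \<beta>_def)
  have "0 \<le> t / \<psi> x" using psi_range[OF x] t by auto
  then have m: "0 \<le> min 1 (t / \<psi> x)" "min 1 (t / \<psi> x) \<le> 1" by auto
  have "0 \<le> \<beta> x * min 1 (t / \<psi> x)" using b(1) m(1) by (rule mult_nonneg_nonneg)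
  moreover have "\<beta> x * min 1 (t / \<psi> x) \<le> 1" using b(2) m(1) m(2) by (rule mult_le_one)
  ultimately show ?thesis by (simp add: \<sigma>_def)
qed

lemma sigma_range': "fst u \<in> topspace X \<Longrightarrow> snd u \<in> {0..1} \<Longrightarrow> \<sigma> u \<in> {0..1}"
  using sigma_range[of "fst u" "snd u"] by simp

lemma D_top: "x \<in> topspace X \<Longrightarrow> t \<in> {0..1} \<Longrightarrow> D (x,t) \<in> topspace X"
proof (cases "\<kappa> x \<le> 1/4")
  case False
  assume x: "x \<in> topspace X" and t: "t \<in> {0..1}"
  then have "x \<in> V" using kappa_V False by simp
  then have "G (x, \<sigma> (x,t)) \<in> topspace X" using G_top sigma_range[OF x t] by blast
  then show ?thesis using False by (simp add: D_def)
qed (simp add: D_def)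

lemma D0: "x \<in> topspace X \<Longrightarrow> D (x,0) = x"
proof (cases "\<kappa> x \<le> 1/4")
  case False
  assume x: "x \<in> topspace X"
  then have "x \<in> V" using kappa_V False by simp
  moreover have "\<sigma> (x,0) = 0" by (simp add: \<sigma>_def)
  ultimately show ?thesis using False G0 by (simp add: D_def)
qed (simp add: D_def)

lemma DA: "a \<in> A \<Longrightarrow> t \<in> {0..1} \<Longrightarrow> D (a,t) = a"
proof -
  assume a: "a \<in> A" and t: "t \<in> {0..1}"
  then have aX: "a \<in> topspace X" by (simp add: A_def)
  have "\<kappa> a = 1" using kappa_A a by simp
  then have "D (a,t) = G (a, \<sigma> (a,t))" by (simp add: D_def)
  also have "\<dots> = a" using GA[OF a sigma_range[OF aX t]] .
  finally show ?thesis .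
qed

lemma Dp: "x \<in> topspace X \<Longrightarrow> t \<in> {0..1} \<Longrightarrow> p (D (x,t)) = p x"
proof (cases "\<kappa> x \<le> 1/4")
  case False
  assume x: "x \<in> topspace X" and t: "t \<in> {0..1}"
  then have "x \<in> V" using kappa_V False by simp
  then have "p (G (x, \<sigma> (x,t))) = p x" using Gp sigma_range[OF x t] by blast
  then show ?thesis using False by (simp add: D_def)
qed (simp add: D_def)

lemma D_in_A: "x \<in> topspace X \<Longrightarrow> t \<in> {0..1} \<Longrightarrow> t > \<psi> x \<Longrightarrow> D (x,t) \<in> A"
proof -
  assume x: "x \<in> topspace X" and t: "t \<in> {0..1}" and tp: "t > \<psi> x"
  then have "\<psi> x < 1" by auto
  then have k: "\<kappa> x > 1/2" using psi_lt1 x by auto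
  then have xV: "x \<in> V" using kappa_V x by auto
  have b: "\<beta> x = 1" using k by (auto simp: \<beta>_def)
  show ?thesis
  proof (cases "\<psi> x = 0")
    case True
    then have "x \<in> A" using psi0 x by auto
    then show ?thesis using DA t by auto
  next
    case False
    then have "\<psi> x > 0" using psi_range[OF x] by linarith
    then have "t / \<psi> x > 1" using tp by simp
    then have "\<sigma> (x,t) = 1" using b by (simp add: \<sigma>_def)
    then have "D (x,t) = r x" using k G1[OF xV] by (simp add: D_def)
    then show ?thesis using rA[of x] xV VU by (auto simp: A_def U_def)
  qed
qed

lemma D_cont_O1: "continuous_map (subtopology (prod_topology X II) {u \<in> topspace (prod_topology X II). \<psi> (fst u) > 0}) X D"
proof -
  let ?Z0 = "prod_topology X II"
  let ?O1 = "{u \<in> topspace ?Z0. \<psi> (fst u) > 0}"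
  let ?Q = "subtopology ?Z0 ?O1"
  have "continuous_map ?Q X (\<lambda>u. if \<kappa> (fst u) \<le> 1/4 then fst u else G (fst u, \<sigma> u))"
  proof (rule continuous_map_cases_le)
    show "continuous_map ?Q euclideanreal (\<lambda>u. \<kappa> (fst u))"
      by (rule cm_comp[OF continuous_map_subtopology_fst kappa_cont])
    show "continuous_map ?Q euclideanreal (\<lambda>u. 1/4)" by simp
    show "continuous_map (subtopology ?Q {x \<in> topspace ?Q. \<kappa> (fst x) \<le> 1/4}) X fst"
      unfolding subtopology_subtopology by (rule continuous_map_subtopology_fst)
    let ?S2 = "?O1 \<inter> {x \<in> topspace ?Q. 1/4 \<le> \<kappa> (fst x)}"
    have eq2: "subtopology ?Q {x \<in> topspace ?Q. 1/4 \<le> \<kappa> (fst x)} = subtopology ?Z0 ?S2"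
      by (simp add: subtopology_subtopology)
    let ?P2 = "subtopology ?Z0 ?S2"
    have top2: "u \<in> topspace ?P2 \<Longrightarrow> fst u \<in> topspace X \<and> snd u \<in> {0..1} \<and> \<psi> (fst u) > 0 \<and> 1/4 \<le> \<kappa> (fst u)" for u
      by auto
    have psc: "continuous_map ?P2 euclideanreal (\<lambda>u. \<psi> (fst u))"
      by (rule cm_comp[OF continuous_map_subtopology_fst psi_cont])
    have bsc: "continuous_map ?P2 euclideanreal (\<lambda>u. \<beta> (fst u))"
      by (rule cm_comp[OF continuous_map_subtopology_fst beta_cont])
    have dc: "continuous_map ?P2 euclideanreal (\<lambda>u. snd u / \<psi> (fst u))"
      by (rule continuous_map_real_divide[OF snd_sub_cont psc]) (use top2 in force)
    have "continuous_map ?P2 euclideanreal (\<lambda>u. \<beta> (fst u) * min 1 (snd u / \<psi> (fst u)))"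
      using continuous_map_real_mult[OF bsc continuous_map_real_min[OF continuous_map_canonical_const dc]] .
    then have sc: "continuous_map ?P2 euclideanreal \<sigma>"
      unfolding \<sigma>_def .
    have sc2: "continuous_map ?P2 II \<sigma>"
      by (rule cm_real_II[OF sc]) (use top2 sigma_range' in blast)
    have "continuous_map ?P2 ?Z0 (\<lambda>u. (fst u, \<sigma> u))"
      by (rule continuous_map_pairedI[OF continuous_map_subtopology_fst sc2])
    then have "continuous_map ?P2 (subtopology ?Z0 (V \<times> {0..1})) (\<lambda>u. (fst u, \<sigma> u))"
    proof (rule cm_sub_into)
      fix u assume u: "u \<in> topspace ?P2"
      then have "fst u \<in> V" using top2[OF u] kappa_V by force
      moreover have "\<sigma> u \<in> {0..1}" using top2[OF u] sigma_range' by blast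
      ultimately show "(fst u, \<sigma> u) \<in> V \<times> {0..1}" by simp
    qed
    then have "continuous_map ?P2 X (\<lambda>u. G (fst u, \<sigma> u))" using G_cont by (rule cm_comp)
    then show "continuous_map (subtopology ?Q {x \<in> topspace ?Q. 1/4 \<le> \<kappa> (fst x)}) X (\<lambda>u. G (fst u, \<sigma> u))"
      unfolding eq2 .
    fix u assume u: "u \<in> topspace ?Q" "\<kappa> (fst u) = 1/4"
    then have x: "fst u \<in> topspace X" by auto
    then have "fst u \<in> V" using u(2) kappa_V by simp
    moreover have "\<beta> (fst u) = 0" using u(2) by (simp add: \<beta>_def)
    ultimately show "fst u = G (fst u, \<sigma> u)" using G0 by (simp add: \<sigma>_def)
  qed
  then show ?thesis by (simp add: D_def)
qed

lemma D_cont: "continuous_map (prod_topology X II) X D"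
proof (rule local_cont)
  let ?Z0 = "prod_topology X II"
  fix z assume z: "z \<in> topspace ?Z0"
  then have "fst z \<in> topspace X" "snd z \<in> {0..1}" by auto
  then show "D z \<in> topspace X" using D_top[of "fst z" "snd z"] by simp
  fix N assume N: "openin X N" and DN: "D z \<in> N"
  show "\<exists>Q. openin ?Z0 Q \<and> z \<in> Q \<and> (\<forall>w\<in>Q. D w \<in> N)"
  proof (cases "\<psi> (fst z) > 0")
    case True
    let ?O1 = "{u \<in> topspace ?Z0. \<psi> (fst u) > 0}"
    have "openin ?Z0 {u \<in> topspace ?Z0. \<psi> (fst u) \<in> {0<..}}"
      by (rule openin_continuous_map_preimage[OF cm_comp[OF continuous_map_fst psi_cont]]) simp
    then have "openin ?Z0 ?O1" by simp
    then show ?thesis using local_from_open[OF _ D_cont_O1 _ N DN] z True by blast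
  next
    case False
    have x0: "fst z \<in> topspace X" and t0: "snd z \<in> {0..1}" using z by auto
    then have "\<psi> (fst z) = 0" using False psi_range by force
    then have x0A: "fst z \<in> A" using psi0 x0 by auto
    then have Dz: "D z = fst z" using DA[OF _ t0] by (cases z) simp
    let ?Zv = "subtopology ?Z0 (V \<times> {0..1})"
    let ?P = "{w \<in> topspace ?Zv. G w \<in> N}"
    have "openin ?Zv ?P" by (rule openin_continuous_map_preimage[OF G_cont N])
    moreover have "openin ?Z0 (V \<times> {0..1})"
      using V_open by (simp add: openin_prod_Times_iff)
    ultimately have Po: "openin ?Z0 ?P" using openin_trans_full by blast
    have sub: "{fst z} \<times> {0..1} \<subseteq> ?P"
    proof
      fix w assume "w \<in> {fst z} \<times> {0..1::real}"
      then obtain t where w: "w = (fst z, t)" "t \<in> {0..1}" by auto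
      then have "G w = fst z" using GA x0A by simp
      then show "w \<in> ?P" using w x0 x0A AV DN Dz by auto
    qed
    have "compactin II {0..1}" by (simp add: compactin_subtopology)
    then obtain U1 V1 where UV: "openin X U1" "openin II V1" "fst z \<in> U1" "{0..1} \<subseteq> V1" "U1 \<times> V1 \<subseteq> ?P"
      using tube_lemma_right[OF Po _ x0 sub] by blast
    let ?Q = "{u \<in> topspace ?Z0. fst u \<in> U1} \<inter> {u \<in> topspace ?Z0. \<kappa> (fst u) \<in> {1/4<..}}"
    have "openin ?Z0 ?Q"
    proof (rule openin_Int)
      show "openin ?Z0 {u \<in> topspace ?Z0. fst u \<in> U1}"
        by (rule openin_continuous_map_preimage[OF continuous_map_fst UV(1)])
      show "openin ?Z0 {u \<in> topspace ?Z0. \<kappa> (fst u) \<in> {1/4<..}}"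
        by (rule openin_continuous_map_preimage[OF cm_comp[OF continuous_map_fst kappa_cont]]) simp
    qed
    moreover have "z \<in> ?Q" using z UV(3) kappa_A[OF x0A] by simp
    moreover have "\<forall>w\<in>?Q. D w \<in> N"
    proof
      fix w assume w: "w \<in> ?Q"
      then have wx: "fst w \<in> topspace X" "snd w \<in> {0..1}" "\<kappa> (fst w) > 1/4" "fst w \<in> U1" by auto
      have "\<sigma> w \<in> {0..1}" using sigma_range' wx by blast
      then have "(fst w, \<sigma> w) \<in> ?P" using UV(4,5) wx(4) by blast
      then show "D w \<in> N" using wx(3) by (simp add: D_def)
    qed
    ultimately show ?thesis by blast
  qed
qed

end


context L begin

lemma A_closed: "closedin X A"
proof -
  have "closedin X {x \<in> topspace X. f x \<in> {0}}"
    by (rule closedin_continuous_map_preimage[OF fc]) simp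
  then show ?thesis by (simp add: A_def)
qed

lemma A_top: "A \<subseteq> topspace X" by (auto simp: A_def)

lemma HEP:
  fixes E :: "'e topology" and q :: "'e \<Rightarrow> 'b" and g h
  assumes gc: "continuous_map X E g" and hc: "continuous_map (prod_topology (subtopology X A) II) E h"
    and hg: "\<And>a. a \<in> A \<Longrightarrow> h (a,0) = g a"
    and gq: "\<And>x. x \<in> topspace X \<Longrightarrow> q (g x) = p x"
    and hq: "\<And>a t. a \<in> A \<Longrightarrow> t \<in> {0..1} \<Longrightarrow> q (h (a,t)) = p a"
  shows "\<exists>H. continuous_map (prod_topology X II) E H \<and> (\<forall>x\<in>topspace X. H (x,0) = g x)
     \<and> (\<forall>a\<in>A. \<forall>t\<in>{0..1}. H (a,t) = h (a,t)) \<and> (\<forall>x\<in>topspace X. \<forall>t\<in>{0..1}. q (H (x,t)) = p x)"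
proof -
  let ?Z0 = "prod_topology X II"
  define M where "M = {u \<in> topspace ?Z0. snd u = 0 \<or> fst u \<in> A}"
  define K where "K = (\<lambda>u. if fst u \<in> A then h u else g (fst u))"
  define \<rho> where "\<rho> = (\<lambda>u. if snd u \<le> \<psi> (fst u) then (D u, 0::real) else (D u, snd u - \<psi> (fst u)))"
  let ?ZM = "subtopology ?Z0 M"
  have Kc: "continuous_map ?ZM E K"
  proof (rule pasting_lemma_closed[where I="{True,False}" and T="\<lambda>b. if b then M \<inter> (A \<times> {0..1}) else M \<inter> (topspace X \<times> {0})"
        and f="\<lambda>b. if b then h else (\<lambda>u. g (fst u))"])
    show "finite {True, False}" by simp
    fix i :: bool assume "i \<in> {True,False}"
    have c1: "closedin ?Z0 (A \<times> {0..1})" using A_closed by (simp add: closedin_prod_Times_iff)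
    have c2: "closedin ?Z0 (topspace X \<times> {0})" by (simp add: closedin_prod_Times_iff)
    show "closedin ?ZM (if i then M \<inter> (A \<times> {0..1}) else M \<inter> (topspace X \<times> {0}))"
      using closedin_subtopology_Int_closed[OF c1, of M] closedin_subtopology_Int_closed[OF c2, of M] by simp
    have "continuous_map (subtopology ?Z0 (A \<times> {0..1})) E h"
      using hc by (simp add: prod_topology_subtopology(1) subtopology_subtopology)
    moreover have eqA: "M \<inter> (A \<times> {0..1}) = A \<times> {0..1}" using A_top by (auto simp: M_def)
    moreover have "subtopology ?ZM (M \<inter> (A \<times> {0..1})) = subtopology ?Z0 (M \<inter> (M \<inter> (A \<times> {0..1})))"
      by (simp only: subtopology_subtopology)
    ultimately have ch: "continuous_map (subtopology ?ZM (M \<inter> (A \<times> {0..1}))) E h"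
      by simp
    have cg: "continuous_map (subtopology ?ZM (M \<inter> (topspace X \<times> {0}))) E (\<lambda>u. g (fst u))"
      unfolding subtopology_subtopology by (rule cm_comp[OF continuous_map_subtopology_fst gc])
    show "continuous_map (subtopology ?ZM (if i then M \<inter> (A \<times> {0..1}) else M \<inter> (topspace X \<times> {0})))
           E (if i then h else (\<lambda>u. g (fst u)))"
      using ch cg by simp
  next
    fix i j :: bool and x
    assume "i \<in> {True,False}" "j \<in> {True,False}"
      "x \<in> topspace ?ZM \<inter> (if i then M \<inter> (A \<times> {0..1}) else M \<inter> (topspace X \<times> {0})) \<inter>
           (if j then M \<inter> (A \<times> {0..1}) else M \<inter> (topspace X \<times> {0}))"
    then show "(if i then h else (\<lambda>u. g (fst u))) x = (if j then h else (\<lambda>u. g (fst u))) x"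
      using hg by (cases i; cases j; cases x) auto
  next
    fix x assume x: "x \<in> topspace ?ZM"
    show "\<exists>j. j \<in> {True,False} \<and> x \<in> (if j then M \<inter> (A \<times> {0..1}) else M \<inter> (topspace X \<times> {0})) \<and>
          K x = (if j then h else (\<lambda>u. g (fst u))) x"
    proof (cases "fst x \<in> A")
      case True
      then show ?thesis using x by (intro exI[of _ True]) (auto simp: K_def M_def)
    next
      case False
      then show ?thesis using x by (intro exI[of _ False]) (auto simp: K_def M_def)
    qed
  qed
  have \<rho>c: "continuous_map ?Z0 ?ZM \<rho>"
  proof (rule cm_sub_into)
    show "continuous_map ?Z0 ?Z0 \<rho>"
      unfolding \<rho>_def
    proof (rule continuous_map_cases_le)
      show "continuous_map ?Z0 euclideanreal snd" by (rule cm_II_real[OF continuous_map_snd])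
      show "continuous_map ?Z0 euclideanreal (\<lambda>u. \<psi> (fst u))" by (rule cm_comp[OF continuous_map_fst psi_cont])
      let ?P1 = "subtopology ?Z0 {x \<in> topspace ?Z0. snd x \<le> \<psi> (fst x)}"
      have "continuous_map ?P1 II (\<lambda>u. 0::real)" by (simp add: continuous_map_const)
      then show "continuous_map ?P1 ?Z0 (\<lambda>u. (D u, 0::real))"
        by (rule continuous_map_pairedI[OF continuous_map_from_subtopology[OF D_cont]])
      let ?P2 = "subtopology ?Z0 {x \<in> topspace ?Z0. \<psi> (fst x) \<le> snd x}"
      have "continuous_map ?P2 euclideanreal (\<lambda>u. snd u - \<psi> (fst u))"
        by (rule continuous_map_diff[OF snd_sub_cont cm_comp[OF continuous_map_subtopology_fst psi_cont]])
      then have "continuous_map ?P2 II (\<lambda>u. snd u - \<psi> (fst u))"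
      proof (rule cm_real_II)
        fix u assume "u \<in> topspace ?P2"
        then have "fst u \<in> topspace X" "snd u \<in> {0..1}" "\<psi> (fst u) \<le> snd u" by auto
        then show "snd u - \<psi> (fst u) \<in> {0..1}" using psi_range[of "fst u"] by auto
      qed
      then show "continuous_map ?P2 ?Z0 (\<lambda>u. (D u, snd u - \<psi> (fst u)))"
        by (rule continuous_map_pairedI[OF continuous_map_from_subtopology[OF D_cont]])
    qed auto
    fix u assume u: "u \<in> topspace ?Z0"
    then have x: "fst u \<in> topspace X" and t: "snd u \<in> {0..1}" by auto
    have Dt: "D u \<in> topspace X" using D_top[OF x t] by simp
    show "\<rho> u \<in> M"
    proof (cases "snd u \<le> \<psi> (fst u)")
      case True
      then show ?thesis using Dt by (simp add: \<rho>_def M_def)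
    next
      case False
      then have "D u \<in> A" using D_in_A[OF x t] by simp
      moreover have "snd u - \<psi> (fst u) \<in> {0..1}" using False t psi_range[OF x] by auto
      ultimately show ?thesis using False Dt by (simp add: \<rho>_def M_def)
    qed
  qed
  have \<rho>M: "u \<in> topspace ?Z0 \<Longrightarrow> \<rho> u \<in> M" for u
    using continuous_map_image_subset_topspace[OF \<rho>c] by auto
  show ?thesis
  proof (intro exI conjI ballI)
    show "continuous_map ?Z0 E (\<lambda>u. K (\<rho> u))" using \<rho>c Kc by (rule cm_comp)
    fix x assume x: "x \<in> topspace X"
    have "\<rho> (x,0) = (x,0)" using psi_range[OF x] D0[OF x] by (simp add: \<rho>_def)
    then show "K (\<rho> (x,0)) = g x" using hg by (simp add: K_def)
  next
    fix a t assume a: "a \<in> A" and t: "t \<in> {0..1::real}"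
    have "\<psi> a = 0" using psi_A a by simp
    then have "\<rho> (a,t) = (a,t)" using DA[OF a t] t by (auto simp: \<rho>_def)
    then show "K (\<rho> (a,t)) = h (a,t)" using a by (simp add: K_def)
  next
    fix x t assume x: "x \<in> topspace X" and t: "t \<in> {0..1::real}"
    have m: "\<rho> (x,t) \<in> M" using \<rho>M x t by simp
    have fr: "fst (\<rho> (x,t)) = D (x,t)" by (simp add: \<rho>_def)
    have pD: "p (D (x,t)) = p x" using Dp[OF x t] .
    show "q (K (\<rho> (x,t))) = p x"
    proof (cases "D (x,t) \<in> A")
      case True
      have "snd (\<rho> (x,t)) \<in> {0..1}" using m by (auto simp: M_def)
      then have "q (h (\<rho> (x,t))) = p (D (x,t))" using hq[OF True] fr by (metis prod.collapse)
      then show ?thesis using True fr pD by (simp add: K_def)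
    next
      case False
      have "D (x,t) \<in> topspace X" using D_top[OF x t] .
      then show ?thesis using False fr pD gq by (simp add: K_def)
    qed
  qed
qed

end


theorem proposition4p6:
  fixes B :: "'b topology" and X :: "'a topology" and p :: "'a \<Rightarrow> 'b" and f :: "'a \<Rightarrow> real"
  assumes "fibrewise_LEC B X p"
    and "continuous_map X (top_of_set {0..1}) f"
    and "fibrewise_retract X p {x \<in> topspace X. f x = 0} {x \<in> topspace X. f x < 1}"
  shows "closed_fibrewise_cofibration TYPE('e) B (subtopology X {x \<in> topspace X. f x = 0}) p X p id"
proof -
  let ?A = "{x \<in> topspace X. f x = 0}"
  let ?U = "{x \<in> topspace X. f x < 1}"
  obtain R where R:
    "continuous_map (prod_topology (fibre_product X p) II) (prod_topology (fibre_product X p) II) R"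
    "\<And>z. z \<in> topspace (fibre_product X p) \<Longrightarrow> R (z,0) = (z,0)"
    "\<And>x t. x \<in> topspace X \<Longrightarrow> t \<in> {0..1} \<Longrightarrow> R ((x,x),t) = ((x,x),t)"
    "\<And>z t. z \<in> topspace (fibre_product X p) \<Longrightarrow> t \<in> {0..1} \<Longrightarrow> snd (R (z,t)) > 0 \<Longrightarrow> fst (fst (R (z,t))) = snd (fst (R (z,t)))"
    "\<And>z t. z \<in> topspace (fibre_product X p) \<Longrightarrow> t \<in> {0..1} \<Longrightarrow> p (fst (fst (R (z,t)))) = p (fst z)"
    using extract_R[OF assms(1)] by blast
  obtain r where r: "fibrewise_map (subtopology X ?U) p (subtopology X ?A) p r" "\<And>x. x \<in> ?A \<Longrightarrow> r x = x"
    using assms(3) unfolding fibrewise_retract_def by blast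
  have fc: "continuous_map X euclideanreal f" using assms(2) by (rule cm_II_real)
  have frange: "\<And>x. x \<in> topspace X \<Longrightarrow> 0 \<le> f x \<and> f x \<le> 1"
    using continuous_map_image_subset_topspace[OF assms(2)] by auto
  have rcs: "continuous_map (subtopology X ?U) (subtopology X ?A) r" using r(1) by (simp add: fibrewise_map_def)
  have rc: "continuous_map (subtopology X ?U) X r" using rcs by (rule continuous_map_into_fulltopology)
  have rA: "r x \<in> topspace X \<and> f (r x) = 0 \<and> p (r x) = p x" if "x \<in> topspace X" "f x < 1" for x
  proof -
    have "x \<in> topspace (subtopology X ?U)" using that by simp
    then have "r x \<in> topspace (subtopology X ?A)" using continuous_map_image_subset_topspace[OF rcs] by blast
    moreover have "p (r x) = p x" using r(1) that by (simp add: fibrewise_map_def)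
    ultimately show ?thesis by simp
  qed
  interpret L X p f r R
    using R fc frange rc rA r(2) by unfold_locales auto
  have Aeq: "?A = A" by (simp add: A_def)
  have topA: "topspace (subtopology X ?A) = ?A" by auto
  have topA': "topspace X \<inter> ?A = ?A" by auto
  show ?thesis
    unfolding closed_fibrewise_cofibration_def fibrewise_cofibration_def
  proof (intro conjI allI impI)
    show "fibrewise_map (subtopology X ?A) p X p id"
      by (simp add: fibrewise_map_def)
    show "embedding_map (subtopology X ?A) X id"
      unfolding embedding_map_def by (simp add: topA topA')
    show "closedin X (id ` topspace (subtopology X ?A))"
      using A_closed A_top by (simp add: topA Aeq Int_absorb1)
    fix E :: "'e topology" and q g h
    assume a: "fibrewise_space B E q \<and> fibrewise_map X p E q g \<and>
         fibrewise_map (prod_topology (subtopology X ?A) II) (\<lambda>(a, t). p a) E q h \<and>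
         (\<forall>a\<in>topspace (subtopology X ?A). h (a, 0) = g (id a))"
    have gc: "continuous_map X E g" and gq: "\<And>x. x \<in> topspace X \<Longrightarrow> q (g x) = p x"
      using a by (auto simp: fibrewise_map_def)
    have hc: "continuous_map (prod_topology (subtopology X A) II) E h"
      using a by (simp add: fibrewise_map_def Aeq)
    have hq: "\<And>a t. a \<in> A \<Longrightarrow> t \<in> {0..1} \<Longrightarrow> q (h (a,t)) = p a"
      using a by (auto simp: fibrewise_map_def A_def)
    have hg: "\<And>a. a \<in> A \<Longrightarrow> h (a,0) = g a"
      using a by (auto simp: A_def)
    obtain H where H: "continuous_map (prod_topology X II) E H" "\<forall>x\<in>topspace X. H (x,0) = g x"
      "\<forall>a\<in>A. \<forall>t\<in>{0..1}. H (a,t) = h (a,t)" "\<forall>x\<in>topspace X. \<forall>t\<in>{0..1}. q (H (x,t)) = p x"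
      using HEP[OF gc hc hg gq hq] by blast
    show "\<exists>H. fibrewise_map (prod_topology X II) (\<lambda>(x, t). p x) E q H \<and>
             (\<forall>x\<in>topspace X. H (x, 0) = g x) \<and>
             (\<forall>a\<in>topspace (subtopology X ?A). \<forall>t\<in>{0..1}. H (id a, t) = h (a, t))"
      using H by (intro exI[of _ H]) (auto simp: fibrewise_map_def A_def)
  qed
qed


end
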